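(* Let $D$ be a delta-matroid on $[n,\overline{n}]$. Let $A,B\subseteq[n]$ be disjoint, and let $S\in\operatorname{AdS}_n$ be disjoint from $A\cup B\cup\overline{A}\cup\overline{B}$. Then $$g_{D/A\setminus B}(S)=g_D(S\cup A\cup\overline{B})-g_D(A\cup\overline{B}).$$
   Context: For a finite $E\subseteq\{1,2,\dots\}$ let $E\cup\overline{E}$ consist of $E$ and formal copies $\overline{i}$ ($i\in E$), with involution $a\mapsto\overline{a}$; $\overline{S}=\{\overline{a}:a\in S\}$; $[n,\overline{n}]$ is the case $E=[n]$. A subset is admissible if it contains at most one of $i,\overline{i}$ for each $i$; $\operatorname{AdS}_n$ is the set of admissible subsets of $[n,\overline{n}]$. In $\mathbb{R}^E$ set $e_{\overline{i}}=-e_i$, $e_S=\sum_{a\in S}e_a$. A delta-matroid on $E\cup\overline{E}$ is a nonempty collection $\mathcal{F}$ of admissible sets of size $|E|$ (feasible sets) such that $\operatorname{Conv}\{e_B:B\in\mathcal{F}\}$ has all edges parallel to some $e_i$ or $e_i\pm e_j$. Its rank function is $g_D(S)=\max_{B\in\mathcal{F}}(|S\cap B|-|\overline{S}\cap B|)$ for admissible $S$. For $i\in E$: $i$ is a loop if no feasible set contains $i$, and a coloop if every feasible set contains $i$. If $i$ is not a loop, the contraction $D/i$ (on $(E\setminus\{i\})\cup\overline{(E\setminus\{i\})}$) has feasible sets $B\setminus\{i\}$ for feasible $B\ni i$; if $i$ is not a coloop, the deletion $D\setminus i$ has feasible sets $B\setminus\{\overline{i}\}$ for feasible $B\ni\overline{i}$;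 the projection $D(i)$ has feasible sets $B\setminus\{i,\overline{i}\}$ for all feasible $B$; if $i$ is a loop or a coloop, $D/i=D\setminus i=D(i)$. For $A\subseteq E$, $D/A$ and $D\setminus A$ are obtained by successively contracting, resp. deleting, all elements of $A$ (the result does not depend on the order); for disjoint $A,B$, $D/A\setminus B$ is obtained by contracting $A$ and then deleting $B$ (same as deleting $B$ then contracting $A$). *)

theory Defs
  imports "HOL-Analysis.Analysis"
begin

text \<open>Signed elements: Pl i is the element i of E, Br i is its formal copy (i-bar).
  The ground set E is an arbitrary subset of a finite type 'a (so that the
  vectors e_S live in the Euclidean space real^'a; coordinates outside E are 0).\<close>

datatype 'a selt = Pl 'a | Br 'a

fun bar :: "'a selt \<Rightarrow> 'a selt" where
  "bar (Pl i) = Br i"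
| "bar (Br i) = Pl i"

definition ground :: "'a set \<Rightarrow> 'a selt set" where
  "ground E = Pl ` E \<union> Br ` E"

definition admissible :: "'a set \<Rightarrow> 'a selt set \<Rightarrow> bool" where
  "admissible E S \<longleftrightarrow> S \<subseteq> ground E \<and> (\<forall>i. \<not> (Pl i \<in> S \<and> Br i \<in> S))"

fun evec :: "'a selt \<Rightarrow> real ^ 'a::finite" where
  "evec (Pl i) = axis i 1"
| "evec (Br i) = - axis i 1"

definition eset :: "'a selt set \<Rightarrow> real ^ 'a::finite" where
  "eset S = (\<Sum>a\<in>S. evec a)"

definition edge_dirs :: "'a::finite set \<Rightarrow> (real ^ 'a) set" where
  "edge_dirs E = {axis i 1 | i. i \<in> E}
     \<union> {axis i 1 + axis j 1 | i j. i \<in> E \<and> j \<in> E \<and> i \<noteq> j}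
     \<union> {axis i 1 - axis j 1 | i j. i \<in> E \<and> j \<in> E \<and> i \<noteq> j}"

definition delta_matroid :: "'a::finite set \<Rightarrow> 'a selt set set \<Rightarrow> bool" where
  "delta_matroid E F \<longleftrightarrow>
     F \<noteq> {} \<and>
     (\<forall>B\<in>F. admissible E B \<and> card B = card E) \<and>
     (\<forall>Ed. Ed face_of convex hull (eset ` F) \<and> aff_dim Ed = 1 \<longrightarrow>
        (\<exists>v\<in>edge_dirs E. \<forall>x\<in>Ed. \<forall>y\<in>Ed. \<exists>c::real. y - x = c *\<^sub>R v))"

definition rank_fn :: "'a selt set set \<Rightarrow> 'a selt set \<Rightarrow> int" where
  "rank_fn F S = Max ((\<lambda>B. int (card (S \<inter> B)) - int (card (bar ` S \<inter> B))) ` F)"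

definition proj :: "'a selt set set \<Rightarrow> 'a \<Rightarrow> 'a selt set set" where
  "proj F i = (\<lambda>B. B - {Pl i, Br i}) ` F"

definition contract1 :: "'a selt set set \<Rightarrow> 'a \<Rightarrow> 'a selt set set" where
  "contract1 F i = (if \<exists>B\<in>F. Pl i \<in> B
      then (\<lambda>B. B - {Pl i}) ` {B \<in> F. Pl i \<in> B} else proj F i)"

definition delete1 :: "'a selt set set \<Rightarrow> 'a \<Rightarrow> 'a selt set set" where
  "delete1 F i = (if \<exists>B\<in>F. Br i \<in> B
      then (\<lambda>B. B - {Br i}) ` {B \<in> F. Br i \<in> B} else proj F i)"

text \<open>D/A and D\A: successive contraction / deletion of the elements of A, in some
  (arbitrary, fixed) order; the result is order independent.\<close>
definition contract :: "'a selt set set \<Rightarrow> 'a set \<Rightarrow> 'a selt set set" where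
  "contract F A = foldl contract1 F (SOME xs. set xs = A \<and> distinct xs)"

definition delete :: "'a selt set set \<Rightarrow> 'a set \<Rightarrow> 'a selt set set" where
  "delete F A = foldl delete1 F (SOME xs. set xs = A \<and> distinct xs)"

end

theory Submission imports Defs begin

fun idx :: "'a selt \<Rightarrow> 'a" where "idx (Pl i) = i" | "idx (Br i) = i"

definition tv :: "'a set \<Rightarrow> 'a selt set \<Rightarrow> bool" where
  "tv E B \<longleftrightarrow> B \<subseteq> ground E \<and> (\<forall>i\<in>E. Pl i \<in> B \<longleftrightarrow> Br i \<notin> B)"

definition sg :: "'a selt set \<Rightarrow> 'a \<Rightarrow> real" where
  "sg B i = (if Pl i \<in> B then 1 else -1)"

definition L :: "'a set \<Rightarrow> ('a \<Rightarrow> real) \<Rightarrow> 'a selt set \<Rightarrow> real" where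
  "L E c B = (\<Sum>j\<in>E. c j * sg B j)"

definition dif :: "'a set \<Rightarrow> 'a selt set \<Rightarrow> 'a selt set \<Rightarrow> 'a set" where
  "dif E u w = {j\<in>E. sg u j \<noteq> sg w j}"

definition amax :: "'a set \<Rightarrow> ('a \<Rightarrow> real) \<Rightarrow> 'a selt set set \<Rightarrow> 'a selt set set" where
  "amax E c M = {z\<in>M. \<forall>z'\<in>M. L E c z' \<le> L E c z}"

definition EP2 :: "'a set \<Rightarrow> 'a selt set set \<Rightarrow> bool" where
  "EP2 E M \<longleftrightarrow> (\<forall>c u w. u \<noteq> w \<longrightarrow> amax E c M = {u,w} \<longrightarrow> card (dif E u w) \<le> 2)"

lemma sg_cases: "sg B j = 1 \<or> sg B j = -1"
  by (simp add: sg_def)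

lemma finite_ground: "finite E \<Longrightarrow> finite (ground E)"
  by (simp add: ground_def)

lemma tv_of_dm:
  assumes E: "finite E" and ad: "admissible E B" and c: "card B = card E"
  shows "tv E B"
proof -
  have sub: "B \<subseteq> ground E" using ad by (simp add: admissible_def)
  have fin: "finite B" using sub finite_ground[OF E] finite_subset by blast
  have inj: "inj_on idx B"
  proof (rule inj_onI)
    fix x y assume "x \<in> B" "y \<in> B" "idx x = idx y"
    then show "x = y" using ad unfolding admissible_def
      by (cases x; cases y) auto
  qed
  have im: "idx ` B \<subseteq> E" using sub by (auto simp: ground_def)
  have "card (idx ` B) = card E" using card_image[OF inj] c by simp
  then have eq: "idx ` B = E" using card_subset_eq[OF E im] by simp
  show ?thesis unfolding tv_def
  proof (intro conjI ballI sub)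
    fix i assume "i \<in> E"
    then obtain a where "a \<in> B" "idx a = i" using eq by blast
    then have "Pl i \<in> B \<or> Br i \<in> B" by (cases a) auto
    then show "Pl i \<in> B \<longleftrightarrow> Br i \<notin> B" using ad unfolding admissible_def by blast
  qed
qed

lemma tv_eq:
  assumes "tv E u" "tv E w" "\<And>i. i \<in> E \<Longrightarrow> sg u i = sg w i"
  shows "u = w"
proof -
  have "\<And>a. a \<in> u \<longleftrightarrow> a \<in> w"
  proof -
    fix a
    show "a \<in> u \<longleftrightarrow> a \<in> w"
    proof (cases a)
      case (Pl i)
      then show ?thesis using assms(3)[of i] assms(1,2)
        unfolding tv_def sg_def ground_def by (auto split: if_splits)
    next
      case (Br i)
      then show ?thesis using assms(3)[of i] assms(1,2)
        unfolding tv_def sg_def ground_def by (auto split: if_splits)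
    qed
  qed
  then show ?thesis by blast
qed

lemma evec_nth: "evec a $ i = (if a = Pl i then 1 else 0) + (if a = Br i then -1 else 0)"
  by (cases a) (auto simp: axis_def)

lemma eset_nth:
  assumes E: "finite E" and t: "tv E B"
  shows "eset B $ i = (if i \<in> E then sg B i else 0)"
proof -
  have fin: "finite B" using t finite_ground[OF E] finite_subset unfolding tv_def by blast
  have "eset B $ i = (\<Sum>a\<in>B. (if a = Pl i then 1 else 0)) + (\<Sum>a\<in>B. (if a = Br i then -1 else 0))"
    unfolding eset_def by (simp add: evec_nth sum.distrib)
  also have "\<dots> = (if Pl i \<in> B then 1 else 0) + (if Br i \<in> B then -1 else 0)"
    using fin by (simp add: sum.delta')
  also have "\<dots> = (if i \<in> E then sg B i else 0)"
    using t unfolding tv_def sg_def ground_def by auto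
  finally show ?thesis .
qed

lemma L_inner:
  assumes E: "finite E" and t: "tv E B"
  shows "L E c B = (\<chi> j. if j \<in> E then c j else 0) \<bullet> eset B"
proof -
  have "(\<chi> j. if j \<in> E then c j else 0) \<bullet> eset B = (\<Sum>j\<in>UNIV. if j \<in> E then c j * sg B j else 0)"
    unfolding inner_vec_def by (rule sum.cong) (auto simp: eset_nth[OF E t])
  also have "\<dots> = L E c B" unfolding L_def using sum.inter_restrict[of UNIV "\<lambda>j. c j * sg B j" E] by simp
  finally show ?thesis by simp
qed

lemma edge_dirs_supp:
  assumes "v \<in> edge_dirs E"
  shows "\<exists>i j. \<forall>k. v $ k \<noteq> 0 \<longrightarrow> k = i \<or> k = j"
proof -
  have "(\<exists>i. v = axis i 1) \<or> (\<exists>i j. v = axis i 1 + axis j 1) \<or> (\<exists>i j. v = axis i 1 - axis j 1)"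
    using assms unfolding edge_dirs_def by blast
  then show ?thesis
  proof (elim disjE exE)
    fix i assume "v = axis i 1" then show ?thesis by (intro exI[of _ i]) (simp add: axis_def)
  next
    fix i j assume "v = axis i 1 + axis j 1" then show ?thesis
      by (intro exI[of _ i] exI[of _ j]) (simp add: axis_def)
  next
    fix i j assume "v = axis i 1 - axis j 1" then show ?thesis
      by (intro exI[of _ i] exI[of _ j]) (simp add: axis_def)
  qed
qed

lemma EP2_dm:
  fixes E :: "'a::finite set"
  assumes dm: "delta_matroid E F"
  shows "EP2 E F"
  unfolding EP2_def
proof (intro allI impI)
  fix c u w assume uw: "u \<noteq> w" and am: "amax E c F = {u,w}"
  have E: "finite E" by simp
  have tvF: "\<And>B. B \<in> F \<Longrightarrow> tv E B" using dm tv_of_dm[OF E] unfolding delta_matroid_def by blast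
  have "F \<subseteq> Pow (ground E)" using tvF unfolding tv_def by blast
  then have finF: "finite F" using finite_ground[OF E] finite_subset by blast
  define cv where "cv = (\<chi> j. if j \<in> E then c j else 0)"
  define V where "V = eset ` F"
  have u: "u \<in> F" and w: "w \<in> F" using am unfolding amax_def by auto
  define m where "m = cv \<bullet> eset u"
  have Lin: "\<And>B. B \<in> F \<Longrightarrow> L E c B = cv \<bullet> eset B" using L_inner[OF E tvF] cv_def by blast
  have "u \<in> amax E c F" "w \<in> amax E c F" using am by auto
  then have "L E c w \<le> L E c u" "L E c u \<le> L E c w" using u w unfolding amax_def by auto
  then have mw: "cv \<bullet> eset w = m" using Lin[OF u] Lin[OF w] unfolding m_def by simp
  have le: "\<And>x. x \<in> V \<Longrightarrow> cv \<bullet> x \<le> m"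
  proof -
    fix x assume "x \<in> V"
    then obtain B where "B \<in> F" "x = eset B" unfolding V_def by blast
    moreover have "u \<in> amax E c F" using am by auto
    ultimately show "cv \<bullet> x \<le> m" using Lin u unfolding amax_def m_def by auto
  qed
  have eqm: "\<And>B. B \<in> F \<Longrightarrow> cv \<bullet> eset B = m \<Longrightarrow> B = u \<or> B = w"
  proof -
    fix B assume "B \<in> F" "cv \<bullet> eset B = m"
    then have "B \<in> amax E c F" using le Lin unfolding amax_def V_def by auto
    then show "B = u \<or> B = w" using am by auto
  qed
  have hullle: "convex hull V \<subseteq> {x. cv \<bullet> x \<le> m}"
    by (rule hull_minimal) (use le convex_halfspace_le in auto)
  define Ed where "Ed = convex hull V \<inter> {x. cv \<bullet> x = m}"
  have face: "Ed face_of convex hull V"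
    unfolding Ed_def by (rule face_of_Int_supporting_hyperplane_le) (use hullle in auto)
  have finV: "finite V" unfolding V_def using finF by simp
  obtain S' where S': "S' \<subseteq> V" "Ed = convex hull S'"
    using face_of_convex_hull_subset[OF finite_imp_compact[OF finV] face] by blast
  have S'sub: "S' \<subseteq> {eset u, eset w}"
  proof
    fix x assume "x \<in> S'"
    then have "x \<in> Ed" using S'(2) hull_inc by metis
    moreover have "x \<in> V" using \<open>x \<in> S'\<close> S'(1) by blast
    then obtain B where B: "B \<in> F" "x = eset B" unfolding V_def by blast
    have "cv \<bullet> x = m" using \<open>x \<in> Ed\<close> unfolding Ed_def by blast
    then have "B = u \<or> B = w" using eqm B by blast
    then show "x \<in> {eset u, eset w}" using B by blast
  qed
  have pu: "eset u \<in> Ed" and pw: "eset w \<in> Ed"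
  proof -
    have "eset u \<in> V" "eset w \<in> V" using u w unfolding V_def by auto
    then show "eset u \<in> Ed" "eset w \<in> Ed" unfolding Ed_def using hull_inc m_def mw by auto
  qed
  obtain i0 where i0: "i0 \<in> E" "sg u i0 \<noteq> sg w i0"
    using tv_eq[OF tvF[OF u] tvF[OF w]] uw by blast
  have pne: "eset u \<noteq> eset w"
    using i0 eset_nth[OF E tvF[OF u], of i0] eset_nth[OF E tvF[OF w], of i0] by auto
  have "aff_dim Ed \<le> aff_dim {eset u, eset w}"
  proof -
    have "aff_dim Ed = aff_dim S'" using S'(2) aff_dim_convex_hull by metis
    also have "\<dots> \<le> aff_dim {eset u, eset w}" using S'sub by (rule aff_dim_subset)
    finally show ?thesis .
  qed
  moreover have "aff_dim {eset u, eset w} \<le> aff_dim Ed"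
    using pu pw by (intro aff_dim_subset) auto
  ultimately have ad: "aff_dim Ed = 1" using pne by simp
  obtain v where v: "v \<in> edge_dirs E" "\<forall>x\<in>Ed. \<forall>y\<in>Ed. \<exists>k::real. y - x = k *\<^sub>R v"
    using dm face ad unfolding delta_matroid_def V_def by blast
  obtain k where k: "eset w - eset u = k *\<^sub>R v" using v pu pw by blast
  obtain i j where ij: "\<forall>l. v $ l \<noteq> 0 \<longrightarrow> l = i \<or> l = j" using edge_dirs_supp[OF v(1)] by blast
  have "dif E u w \<subseteq> {i, j}"
  proof
    fix l assume "l \<in> dif E u w"
    then have l: "l \<in> E" "sg u l \<noteq> sg w l" unfolding dif_def by auto
    then have "(eset w - eset u) $ l \<noteq> 0"
      using eset_nth[OF E tvF[OF u], of l] eset_nth[OF E tvF[OF w], of l] by auto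
    then have "v $ l \<noteq> 0" using k by auto
    then show "l \<in> {i,j}" using ij by auto
  qed
  then have "card (dif E u w) \<le> card {i,j}" by (intro card_mono) auto
  also have "\<dots> \<le> 2" by (simp add: card_insert_le_m1)
  finally show "card (dif E u w) \<le> 2" .
qed


definition mx :: "'a set \<Rightarrow> ('a \<Rightarrow> real) \<Rightarrow> 'a selt set set \<Rightarrow> real" where
  "mx E c M = Max (L E c ` M)"

definition dl :: "'a \<Rightarrow> real \<Rightarrow> 'a \<Rightarrow> real" where
  "dl i \<sigma> = (\<lambda>j. if j = i then \<sigma> else 0)"

lemma L_add: "L E (\<lambda>j. a j + b j) B = L E a B + L E b B"
  by (simp add: L_def sum.distrib distrib_right)

lemma L_diff: "L E c z - L E c u = (\<Sum>j\<in>E. c j * (sg z j - sg u j))"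
  by (simp add: L_def sum_subtractf[symmetric] right_diff_distrib)

lemma L_dl: "finite E \<Longrightarrow> i \<in> E \<Longrightarrow> L E (dl i \<sigma>) B = \<sigma> * sg B i"
proof -
  assume "finite E" "i \<in> E"
  have "L E (dl i \<sigma>) B = (\<Sum>j\<in>E. if j = i then \<sigma> * sg B j else 0)"
    unfolding L_def dl_def by (rule sum.cong) auto
  then show ?thesis using \<open>finite E\<close> \<open>i \<in> E\<close> by simp
qed

lemma sg_sq: "sg B j * sg B j = 1"
  by (simp add: sg_def)

lemma abs_sg: "\<bar>sg B j\<bar> = 1"
  by (simp add: sg_def)

lemma amax_sub: "amax E c M \<subseteq> M" by (auto simp: amax_def)

lemma amax_ne:
  assumes "finite M" "M \<noteq> {}" shows "amax E c M \<noteq> {}"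
proof -
  have "Max (L E c ` M) \<in> L E c ` M" using assms by (intro Max_in) auto
  then obtain z where "z \<in> M" "L E c z = Max (L E c ` M)" by auto
  then have "z \<in> amax E c M" using assms unfolding amax_def by auto
  then show ?thesis by blast
qed

lemma amax_val:
  assumes "finite M" "z \<in> amax E c M" shows "L E c z = mx E c M"
proof -
  have "z \<in> M" "\<forall>z'\<in>M. L E c z' \<le> L E c z" using assms(2) unfolding amax_def by auto
  then show ?thesis unfolding mx_def using assms(1)
    by (intro Max_eqI[symmetric]) auto
qed

lemma amax_two:
  assumes "u \<in> M" "w \<in> M" "L E c w = L E c u"
    and "\<And>z. z \<in> M \<Longrightarrow> z \<noteq> u \<Longrightarrow> z \<noteq> w \<Longrightarrow> L E c z < L E c u"
  shows "amax E c M = {u,w}"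
proof -
  have le: "\<And>z. z \<in> M \<Longrightarrow> L E c z \<le> L E c u"
    using assms by (metis order_le_less order_refl)
  show ?thesis
  proof
    show "amax E c M \<subseteq> {u,w}"
    proof
      fix z assume z: "z \<in> amax E c M"
      then have "z \<in> M" "L E c u \<le> L E c z" using assms(1) unfolding amax_def by auto
      then show "z \<in> {u,w}" using assms(4)[of z] by force
    qed
    show "{u,w} \<subseteq> amax E c M" using le assms(1-3) unfolding amax_def by auto
  qed
qed

lemma sum_ind_card:
  assumes "finite E" "D \<subseteq> E"
  shows "(\<Sum>j\<in>E. if j \<in> D then (k::real) else 0) = k * real (card D)"
proof -
  have "(\<Sum>j\<in>E. if j \<in> D then k else 0) = (\<Sum>j\<in>E \<inter> D. k)"
    using sum.inter_restrict[OF assms(1), of "\<lambda>_. k" D] by simp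
  also have "E \<inter> D = D" using assms(2) by blast
  finally show ?thesis by simp
qed

lemma simplex:
  assumes E: "finite E" and tvM: "\<And>B. B \<in> M \<Longrightarrow> tv E B" and ep: "EP2 E M"
    and u: "u \<in> M" and w0: "w0 \<in> M" "L E c u < L E c w0"
  shows "\<exists>w\<in>M. L E c u < L E c w \<and> card (dif E u w) \<le> 2"
proof -
  obtain w where w: "w \<in> M \<and> L E c u < L E c w"
    and wmin: "\<forall>z. z \<in> M \<and> L E c u < L E c z \<longrightarrow> card (dif E u w) \<le> card (dif E u z)"
    using ex_has_least_nat[of "\<lambda>z. z \<in> M \<and> L E c u < L E c z" w0 "\<lambda>z. card (dif E u z)"] w0
    by blast
  show ?thesis
  proof (rule ccontr)
    assume neg: "\<not> ?thesis"
    then have cX: "card (dif E u w) > 2" using w by force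
    define X where "X = dif E u w"
    define d where "d = real (card X)"
    define \<Delta> where "\<Delta> = L E c w - L E c u"
    have XE: "X \<subseteq> E" by (auto simp: X_def dif_def)
    have dpos: "d > 0" using cX unfolding d_def X_def by simp
    have Dpos: "\<Delta> > 0" using w unfolding \<Delta>_def by simp
    have uw: "u \<noteq> w" using w by auto
    define W where "W = (\<Sum>j\<in>E. 2 * \<bar>c j\<bar>)"
    have W0: "W \<ge> 0" unfolding W_def by (intro sum_nonneg) auto
    define K where "K = W + \<Delta> + 1"
    have Kpos: "K > 0" using W0 Dpos unfolding K_def by simp
    define H where "H = (\<lambda>j. if j \<in> X then c j - sg w j * \<Delta> / (2*d) else K * sg u j)"
    define P1 where "P1 z = (\<Sum>j\<in>X. (c j - sg w j * \<Delta> / (2*d)) * (sg z j - sg u j))" for z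
    define P2 where "P2 z = (\<Sum>j\<in>E-X. K * sg u j * (sg z j - sg u j))" for z
    have split: "L E H z - L E H u = P1 z + P2 z" for z
    proof -
      have "L E H z - L E H u = (\<Sum>j\<in>E. H j * (sg z j - sg u j))" by (rule L_diff)
      also have "\<dots> = (\<Sum>j\<in>E-X. H j * (sg z j - sg u j)) + (\<Sum>j\<in>X. H j * (sg z j - sg u j))"
        by (rule sum.subset_diff[OF XE E])
      also have "(\<Sum>j\<in>E-X. H j * (sg z j - sg u j)) = P2 z"
        unfolding P2_def H_def by (rule sum.cong) auto
      also have "(\<Sum>j\<in>X. H j * (sg z j - sg u j)) = P1 z"
        unfolding P1_def H_def by (rule sum.cong) auto
      finally show ?thesis by simp
    qed
    have term2: "K * sg u j * (sg z j - sg u j) = (if sg z j = sg u j then 0 else -2*K)" for z j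
      using sg_cases[of z j] sg_cases[of u j] by auto
    have P2le: "P2 z \<le> 0" for z
      unfolding P2_def by (intro sum_nonpos) (use term2 Kpos in auto)
    have P2bad: "P2 z \<le> -2*K" if "j \<in> E - X" "sg z j \<noteq> sg u j" for z j
    proof -
      have fin: "finite (E - X)" using E by simp
      have "P2 z = K * sg u j * (sg z j - sg u j) + (\<Sum>k\<in>E-X-{j}. K * sg u k * (sg z k - sg u k))"
        unfolding P2_def using sum.remove[OF fin that(1)] by simp
      moreover have "(\<Sum>k\<in>E-X-{j}. K * sg u k * (sg z k - sg u k)) \<le> 0"
        by (intro sum_nonpos) (use term2 Kpos in auto)
      ultimately show ?thesis using term2[where z=z and j=j] that(2) by simp
    qed
    have P2good: "P2 z = 0" if "\<forall>j\<in>E-X. sg z j = sg u j" for z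
      unfolding P2_def using that by simp
    have term1: "(c j - sg w j * \<Delta> / (2*d)) * (sg z j - sg u j) \<le> 2 * \<bar>c j\<bar> + \<Delta> / d" for z j
    proof -
      have a: "\<bar>sg w j * \<Delta> / (2*d)\<bar> = \<Delta> / (2*d)" using dpos Dpos abs_sg[of w j]
        by (simp add: abs_mult)
      have "\<bar>sg z j - sg u j\<bar> \<le> 2" using sg_cases[of z j] sg_cases[of u j] by auto
      have "(c j - sg w j * \<Delta> / (2*d)) * (sg z j - sg u j)
           \<le> \<bar>c j - sg w j * \<Delta> / (2*d)\<bar> * \<bar>sg z j - sg u j\<bar>"
        by (metis abs_ge_self abs_mult)
      also have "\<dots> \<le> (\<bar>c j\<bar> + \<Delta> / (2*d)) * 2"
        apply (rule mult_mono)
        using a abs_triangle_ineq4[of "c j" "sg w j * \<Delta> / (2*d)"]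
          \<open>\<bar>sg z j - sg u j\<bar> \<le> 2\<close> by auto
      also have "\<dots> = 2 * \<bar>c j\<bar> + \<Delta> / d" using dpos by (simp add: field_simps)
      finally show ?thesis .
    qed
    have P1bound: "P1 z \<le> W + \<Delta>" for z
    proof -
      have "P1 z \<le> (\<Sum>j\<in>X. 2 * \<bar>c j\<bar> + \<Delta> / d)"
        unfolding P1_def by (intro sum_mono term1)
      also have "\<dots> = (\<Sum>j\<in>X. 2 * \<bar>c j\<bar>) + d * (\<Delta> / d)"
        by (simp add: sum.distrib d_def)
      also have "d * (\<Delta> / d) = \<Delta>" using dpos by simp
      also have "(\<Sum>j\<in>X. 2 * \<bar>c j\<bar>) \<le> W"
        unfolding W_def by (intro sum_mono2[OF E XE]) auto
      finally show ?thesis by simp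
    qed
    have P1good: "P1 z = (L E c z - L E c u) - \<Delta> / d * real (card (dif E u z))"
      if "\<forall>j\<in>E-X. sg z j = sg u j" for z
    proof -
      have "P1 z = (\<Sum>j\<in>X. c j * (sg z j - sg u j)) - (\<Delta> / (2*d)) * (\<Sum>j\<in>X. sg w j * (sg z j - sg u j))"
      proof -
        have "P1 z = (\<Sum>j\<in>X. c j * (sg z j - sg u j) - (\<Delta> / (2*d)) * (sg w j * (sg z j - sg u j)))"
          unfolding P1_def by (rule sum.cong) (auto simp: field_simps)
        then show ?thesis by (simp add: sum_subtractf sum_distrib_left)
      qed
      moreover have "(\<Sum>j\<in>X. c j * (sg z j - sg u j)) = L E c z - L E c u"
      proof -
        have "L E c z - L E c u = (\<Sum>j\<in>E-X. c j * (sg z j - sg u j)) + (\<Sum>j\<in>X. c j * (sg z j - sg u j))"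
          unfolding L_diff by (rule sum.subset_diff[OF XE E])
        moreover have "(\<Sum>j\<in>E-X. c j * (sg z j - sg u j)) = 0" using that by simp
        ultimately show ?thesis by simp
      qed
      moreover have "(\<Sum>j\<in>X. sg w j * (sg z j - sg u j)) = 2 * real (card (dif E u z))"
      proof -
        have sub: "dif E u z \<subseteq> X" using that XE unfolding dif_def by force
        have "(\<Sum>j\<in>X. sg w j * (sg z j - sg u j)) = (\<Sum>j\<in>X. if j \<in> dif E u z then 2 else 0)"
        proof (rule sum.cong)
          fix j assume j: "j \<in> X"
          then have "sg w j \<noteq> sg u j" "j \<in> E" unfolding X_def dif_def by auto
          then show "sg w j * (sg z j - sg u j) = (if j \<in> dif E u z then 2 else 0)"
            using sg_cases[of z j] sg_cases[of u j] sg_cases[of w j] unfolding dif_def by auto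
        qed simp
        also have "\<dots> = 2 * real (card (dif E u z))"
          by (rule sum_ind_card[OF finite_subset[OF XE E] sub])
        finally show ?thesis .
      qed
      ultimately have "P1 z = (L E c z - L E c u) - (\<Delta> / (2*d)) * (2 * real (card (dif E u z)))"
        by simp
      also have "(\<Delta> / (2*d)) * (2 * real (card (dif E u z))) = \<Delta> / d * real (card (dif E u z))"
        by simp
      finally show ?thesis .
    qed
    have wG: "\<forall>j\<in>E-X. sg w j = sg u j" unfolding X_def dif_def by auto
    have eqw: "L E H w = L E H u"
    proof -
      have "P1 w = \<Delta> - \<Delta> / d * d" using P1good[OF wG] unfolding \<Delta>_def d_def X_def
        by (simp add: dif_def eq_commute[of "sg u _"])
      then have "P1 w = 0" using dpos by simp
      then show ?thesis using split[of w] P2good[OF wG] by simp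
    qed
    have less: "L E H z < L E H u" if z: "z \<in> M" "z \<noteq> u" "z \<noteq> w" for z
    proof (cases "\<forall>j\<in>E-X. sg z j = sg u j")
      case False
      then obtain j where "j \<in> E - X" "sg z j \<noteq> sg u j" by blast
      then have "P2 z \<le> -2*K" by (rule P2bad)
      then show ?thesis using split[of z] P1bound[of z] unfolding K_def using W0 Dpos by simp
    next
      case True
      have ne: "dif E u z \<noteq> {}"
      proof
        assume "dif E u z = {}"
        then have "z = u" using tv_eq[OF tvM[OF z(1)] tvM[OF u]] unfolding dif_def by auto
        then show False using z by simp
      qed
      have sub: "dif E u z \<subseteq> X" using True XE unfolding dif_def by force
      have neX: "dif E u z \<noteq> X"
      proof
        assume eq: "dif E u z = X"
        have "\<And>i. i \<in> E \<Longrightarrow> sg z i = sg w i"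
        proof -
          fix i assume i: "i \<in> E"
          show "sg z i = sg w i"
          proof (cases "i \<in> X")
            case True
            then have "i \<in> dif E u z" "i \<in> dif E u w" using eq unfolding X_def by auto
            then have "sg z i \<noteq> sg u i" "sg w i \<noteq> sg u i" unfolding dif_def by auto
            then show ?thesis using sg_cases[of z i] sg_cases[of u i] sg_cases[of w i] by auto
          next
            case False
            then show ?thesis using True[rule_format, of i] wG i by auto
          qed
        qed
        then have "z = w" using tv_eq[OF tvM[OF z(1)] tvM[OF conjunct1[OF w]]] by auto
        then show False using z by simp
      qed
      have fX: "finite X" using finite_subset[OF XE E] .
      have "card (dif E u z) < card X" using sub neX fX by (simp add: psubset_card_mono psubset_eq)
      then have "\<not> L E c u < L E c z" using wmin z(1) unfolding X_def by force
      then have "L E c z - L E c u \<le> 0" by simp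
      moreover have "card (dif E u z) > 0" using ne fX sub
        by (metis card_gt_0_iff finite_subset)
      ultimately have "P1 z < 0" using P1good[OF True] dpos Dpos
        by (smt (verit) divide_pos_pos mult_pos_pos of_nat_0_less_iff)
      then show ?thesis using split[of z] P2good[OF True] by simp
    qed
    have "amax E H M = {u,w}"
      by (rule amax_two) (use u w eqw less in auto)
    then have "card (dif E u w) \<le> 2" using ep uw unfolding EP2_def by blast
    then show False using cX by simp
  qed
qed


lemma EP2_amax:
  assumes E: "finite E" and finM: "finite M" and ep: "EP2 E M" and i: "i \<in> E"
    and \<sigma>: "\<sigma> = 1 \<or> \<sigma> = -1"
  shows "EP2 E (amax E (dl i \<sigma>) M)"
  unfolding EP2_def
proof (intro allI impI)
  fix c u w assume uw: "u \<noteq> w" and am: "amax E c (amax E (dl i \<sigma>) M) = {u,w}"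
  define M' where "M' = amax E (dl i \<sigma>) M"
  define a where "a z = \<sigma> * sg z i" for z
  have La: "L E (dl i \<sigma>) z = a z" for z using L_dl[OF E i] a_def by simp
  have M'def: "M' = {z\<in>M. \<forall>z'\<in>M. a z' \<le> a z}" unfolding M'_def amax_def La by simp
  define W where "W = (\<Sum>j\<in>E. \<bar>c j\<bar>)"
  have Lb: "\<bar>L E c z\<bar> \<le> W" for z
  proof -
    have "\<bar>L E c z\<bar> \<le> (\<Sum>j\<in>E. \<bar>c j * sg z j\<bar>)" unfolding L_def by (rule sum_abs)
    also have "\<dots> = W" unfolding W_def by (simp add: abs_mult abs_sg)
    finally show ?thesis .
  qed
  have a_cases: "a z = 1 \<or> a z = -1" for z using \<sigma> sg_cases[of z i] by (auto simp: a_def)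
  define K where "K = 2*W + 1"
  define c' where "c' = (\<lambda>j. c j + K * dl i \<sigma> j)"
  have Lc': "L E c' z = L E c z + K * a z" for z
  proof -
    have "L E (\<lambda>j. K * dl i \<sigma> j) z = K * L E (dl i \<sigma>) z"
      unfolding L_def by (simp add: sum_distrib_left mult.assoc)
    then show ?thesis unfolding c'_def L_add La by simp
  qed
  have uM': "u \<in> M'" "w \<in> M'" using amax_sub[of E c "amax E (dl i \<sigma>) M"] am unfolding M'_def by auto
  have uM: "u \<in> M" "w \<in> M" using uM' M'def by auto
  have au: "\<forall>z\<in>M. a z \<le> a u" "\<forall>z\<in>M. a z \<le> a w" using uM' M'def by auto
  have aw: "a w = a u" using au uM by force
  have uA: "u \<in> amax E c M'" "w \<in> amax E c M'" using am unfolding M'_def by auto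
  have Lw: "L E c w = L E c u" using uA uM' unfolding amax_def by force
  have "amax E c' M = {u,w}"
  proof (rule amax_two)
    show "u \<in> M" "w \<in> M" using uM by auto
    show "L E c' w = L E c' u" using Lc' Lw aw by simp
    fix z assume z: "z \<in> M" "z \<noteq> u" "z \<noteq> w"
    show "L E c' z < L E c' u"
    proof (cases "z \<in> M'")
      case True
      then have "\<forall>z'\<in>M. a z' \<le> a z" using M'def by blast
      then have "a u \<le> a z" using uM(1) by blast
      moreover have "a z \<le> a u" using au(1) z(1) by blast
      ultimately have az: "a z = a u" by linarith
      have le: "L E c z \<le> L E c u" using uA True unfolding amax_def by blast
      have "L E c z \<noteq> L E c u"
      proof
        assume eq: "L E c z = L E c u"
        then have "z \<in> amax E c M'" using uA True eq unfolding amax_def by auto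
        then show False using am z unfolding M'_def by auto
      qed
      then show ?thesis using le az Lc' by simp
    next
      case False
      then obtain z' where "z' \<in> M" "a z < a z'" using z(1) M'def by force
      then have "a z < a u" using au by force
      then have "a z = -1" "a u = 1" using a_cases[of z] a_cases[of u] by auto
      then show ?thesis using Lc'[of z] Lc'[of u] Lb[of z] Lb[of u] unfolding K_def by (simp add: abs_le_iff)
    qed
  qed
  then show "card (dif E u w) \<le> 2" using ep uw unfolding EP2_def by blast
qed

lemma lem2:
  assumes E: "finite E" and tvM: "\<And>B. B \<in> M \<Longrightarrow> tv E B" and finM: "finite M" and ne: "M \<noteq> {}"
    and ep: "EP2 E M" and i: "i \<in> E" and \<sigma>: "\<sigma> = 1 \<or> \<sigma> = -1" and s0: "s i = 0"
    and sb: "\<And>j. \<bar>s j\<bar> \<le> 1"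
  shows "mx E s (amax E (dl i \<sigma>) M) = mx E (\<lambda>j. s j + dl i \<sigma> j) M - mx E (dl i \<sigma>) M"
proof -
  define M' where "M' = amax E (dl i \<sigma>) M"
  define a where "a z = \<sigma> * sg z i" for z
  have La: "L E (dl i \<sigma>) z = a z" for z using L_dl[OF E i] a_def by simp
  have M'def: "M' = {z\<in>M. \<forall>z'\<in>M. a z' \<le> a z}" unfolding M'_def amax_def La by simp
  have a_cases: "a z = 1 \<or> a z = -1" for z using \<sigma> sg_cases[of z i] by (auto simp: a_def)
  have M'fin: "finite M'" using finM M'def by simp
  have M'ne: "M' \<noteq> {}" unfolding M'_def by (rule amax_ne[OF finM ne])
  have "mx E s M' \<in> L E s ` M'" unfolding mx_def using M'fin M'ne by (intro Max_in) auto
  then obtain y where y: "y \<in> M'" "L E s y = mx E s M'" by auto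
  have yM: "y \<in> M" using y M'def by auto
  have ay: "\<forall>z\<in>M. a z \<le> a y" using y M'def by auto
  have aymx: "L E (dl i \<sigma>) y = mx E (dl i \<sigma>) M" using amax_val[OF finM] y(1) unfolding M'_def by blast
  define f where "f = (\<lambda>j. s j + dl i \<sigma> j)"
  have Lf: "L E f z = L E s z + a z" for z unfolding f_def L_add La by simp
  have opt: "\<forall>z\<in>M. L E f z \<le> L E f y"
  proof (rule ccontr)
    assume "\<not> (\<forall>z\<in>M. L E f z \<le> L E f y)"
    then obtain x where x: "x \<in> M" "L E f y < L E f x" by force
    obtain w where w: "w \<in> M" "L E f y < L E f w" "card (dif E y w) \<le> 2"
      using simplex[OF E tvM ep yM x] by blast
    show False
    proof (cases "a w = a y")
      case True
      then have "w \<in> M'" using ay w(1) M'def by auto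
      then have "L E s w \<le> L E s y" using y(2) M'fin unfolding mx_def by simp
      then show False using w(2) Lf True by simp
    next
      case False
      then have aw: "a w = -1" "a y = 1" using a_cases[of w] a_cases[of y] ay w(1) by force+
      have iD: "i \<in> dif E y w" using aw i unfolding dif_def a_def by auto
      have fD: "finite (dif E y w)" using E unfolding dif_def by simp
      have DE: "dif E y w - {i} \<subseteq> E" unfolding dif_def by auto
      have "L E s w - L E s y = (\<Sum>j\<in>E. s j * (sg w j - sg y j))" by (rule L_diff)
      also have "\<dots> \<le> (\<Sum>j\<in>E. if j \<in> dif E y w - {i} then 2 else 0)"
      proof (rule sum_mono)
        fix j assume j: "j \<in> E"
        show "s j * (sg w j - sg y j) \<le> (if j \<in> dif E y w - {i} then 2 else 0)"
        proof (cases "j \<in> dif E y w - {i}")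
          case True
          then show ?thesis using sg_cases[of w j] sg_cases[of y j] sb[of j]
            by (auto simp: abs_le_iff)
        next
          case False
          then have "j = i \<or> sg w j = sg y j" using j unfolding dif_def by auto
          then show ?thesis using s0 False by auto
        qed
      qed
      also have "\<dots> = 2 * real (card (dif E y w - {i}))" by (rule sum_ind_card[OF E DE])
      also have "card (dif E y w - {i}) = card (dif E y w) - 1" using iD fD by simp
      finally have "L E s w - L E s y \<le> 2 * real (card (dif E y w) - 1)" .
      moreover have "real (card (dif E y w) - 1) \<le> 1" using w(3) by simp
      ultimately have "L E s w - L E s y \<le> 2" by simp
      then show False using w(2) Lf[of w] Lf[of y] aw by simp
    qed
  qed
  have "mx E f M = L E f y" unfolding mx_def by (rule Max_eqI) (use finM opt yM in auto)
  then show ?thesis using Lf[of y] La[of y] aymx y(2) unfolding f_def M'_def by simp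
qed

fun tw :: "('a \<times> real) list \<Rightarrow> 'a \<Rightarrow> real" where
  "tw [] = (\<lambda>j. 0)"
| "tw ((i,\<sigma>)#ps) = (\<lambda>j. dl i \<sigma> j + tw ps j)"

definition stepf :: "'a set \<Rightarrow> 'a selt set set \<Rightarrow> 'a \<times> real \<Rightarrow> 'a selt set set" where
  "stepf E M p = amax E (dl (fst p) (snd p)) M"

lemma tw_zero: "j \<notin> fst ` set ps \<Longrightarrow> tw ps j = 0"
  by (induction ps rule: tw.induct) (auto simp: dl_def)

lemma tw_abs: "distinct (map fst ps) \<Longrightarrow> \<forall>p\<in>set ps. snd p = 1 \<or> snd p = -1 \<Longrightarrow> \<bar>tw ps j\<bar> \<le> 1"
proof (induction ps rule: tw.induct)
  case 1 then show ?case by simp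
next
  case (2 i \<sigma> ps)
  show ?case
  proof (cases "j = i")
    case True
    then have "tw ps j = 0" using 2(2) tw_zero by force
    then show ?thesis using True 2(3) by (auto simp: dl_def)
  next
    case False
    then show ?thesis using 2 by (auto simp: dl_def)
  qed
qed

lemma mx_zero: "M \<noteq> {} \<Longrightarrow> mx E (\<lambda>j. 0) M = 0"
proof -
  assume "M \<noteq> {}"
  then have "L E (\<lambda>j. 0) ` M = {0}" unfolding L_def by auto
  then show ?thesis unfolding mx_def by simp
qed

lemma fold_props:
  "finite M \<Longrightarrow> M \<noteq> {} \<Longrightarrow> foldl (stepf E) M ps \<subseteq> M \<and> foldl (stepf E) M ps \<noteq> {}"
proof (induction ps arbitrary: M)
  case Nil then show ?case by simp
next
  case (Cons p ps)
  have s1: "stepf E M p \<subseteq> M" unfolding stepf_def by (rule amax_sub)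
  have s2: "stepf E M p \<noteq> {}" unfolding stepf_def by (rule amax_ne[OF Cons.prems])
  have s3: "finite (stepf E M p)" using finite_subset[OF s1 Cons.prems(1)] .
  show ?case using Cons.IH[OF s3 s2] s1 by auto
qed

lemma main_ind:
  assumes E: "finite E"
  shows "\<And>M s. (\<And>B. B \<in> M \<Longrightarrow> tv E B) \<Longrightarrow> finite M \<Longrightarrow> M \<noteq> {} \<Longrightarrow> EP2 E M \<Longrightarrow>
    distinct (map fst ps) \<Longrightarrow> fst ` set ps \<subseteq> E \<Longrightarrow> (\<forall>p\<in>set ps. snd p = 1 \<or> snd p = -1) \<Longrightarrow>
    (\<And>j. \<bar>s j\<bar> \<le> 1) \<Longrightarrow> (\<And>j. j \<in> fst ` set ps \<Longrightarrow> s j = 0) \<Longrightarrow>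
    mx E s (foldl (stepf E) M ps) = mx E (\<lambda>j. s j + tw ps j) M - mx E (tw ps) M"
proof (induction ps)
  case Nil
  then show ?case using mx_zero[of M E] by simp
next
  case (Cons p rest)
  obtain i \<sigma> where p: "p = (i,\<sigma>)" by force
  define M' where "M' = amax E (dl i \<sigma>) M"
  have i: "i \<in> E" using Cons.prems(6) p by auto
  have \<sigma>: "\<sigma> = 1 \<or> \<sigma> = -1" using Cons.prems(7) p by auto
  have irest: "i \<notin> fst ` set rest" using Cons.prems(5) p by auto
  have fold: "foldl (stepf E) M (p#rest) = foldl (stepf E) M' rest"
    unfolding M'_def p by (simp add: stepf_def)
  have tvM': "\<And>B. B \<in> M' \<Longrightarrow> tv E B" using Cons.prems(1) amax_sub unfolding M'_def by blast
  have finM': "finite M'" unfolding M'_def using finite_subset[OF amax_sub Cons.prems(2)] .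
  have neM': "M' \<noteq> {}" unfolding M'_def by (rule amax_ne[OF Cons.prems(2,3)])
  have epM': "EP2 E M'" unfolding M'_def by (rule EP2_amax[OF E Cons.prems(2,4) i \<sigma>])
  have IH: "mx E s (foldl (stepf E) M' rest) = mx E (\<lambda>j. s j + tw rest j) M' - mx E (tw rest) M'"
    by (rule Cons.IH[OF tvM' finM' neM' epM']) (use Cons.prems in auto)
  have twb: "\<bar>tw rest j\<bar> \<le> 1" for j
    using tw_abs[of rest j] Cons.prems(5,7) by auto
  have s1b: "\<bar>s j + tw rest j\<bar> \<le> 1" for j
  proof (cases "j \<in> fst ` set rest")
    case True then show ?thesis using Cons.prems(9)[of j] twb[of j] by auto
  next
    case False then show ?thesis using tw_zero[OF False] Cons.prems(8)[of j] by simp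
  qed
  have si: "s i = 0" using Cons.prems(9) p by auto
  have L1: "mx E (\<lambda>j. s j + tw rest j) M' = mx E (\<lambda>j. (s j + tw rest j) + dl i \<sigma> j) M - mx E (dl i \<sigma>) M"
    unfolding M'_def
    by (rule lem2[OF E Cons.prems(1-4) i \<sigma>]) (use si tw_zero[OF irest] s1b in auto)
  have L2: "mx E (tw rest) M' = mx E (\<lambda>j. tw rest j + dl i \<sigma> j) M - mx E (dl i \<sigma>) M"
    unfolding M'_def
    by (rule lem2[OF E Cons.prems(1-4) i \<sigma>]) (use tw_zero[OF irest] twb in auto)
  have e1: "(\<lambda>j. s j + tw (p#rest) j) = (\<lambda>j. (s j + tw rest j) + dl i \<sigma> j)"
    unfolding p by (auto simp: algebra_simps)
  have e2: "tw (p#rest) = (\<lambda>j. tw rest j + dl i \<sigma> j)"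
    unfolding p by (auto simp: algebra_simps)
  show ?case unfolding fold IH L1 L2 e1 e2 by (simp add: add.assoc)
qed


definition strip :: "'a set \<Rightarrow> 'a selt set \<Rightarrow> 'a selt set" where
  "strip R B = B - ground R"

lemma ground_insert: "ground (insert i R) = insert (Pl i) (insert (Br i) (ground R))"
  by (auto simp: ground_def)

lemma Pl_ground: "Pl i \<in> ground R \<longleftrightarrow> i \<in> R" and Br_ground: "Br i \<in> ground R \<longleftrightarrow> i \<in> R"
  by (auto simp: ground_def)

lemma contract_step:
  assumes E: "finite E" and i: "i \<in> E" "i \<notin> R" and tvM: "\<And>B. B \<in> M \<Longrightarrow> tv E B"
  shows "contract1 (strip R ` M) i = strip (insert i R) ` amax E (dl i 1) M"
proof -
  have La: "L E (dl i 1) z = sg z i" for z using L_dl[OF E i(1)] by simp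
  have memP: "Pl i \<in> strip R B \<longleftrightarrow> Pl i \<in> B" for B using i(2) by (simp add: strip_def Pl_ground)
  have ex: "(\<exists>B\<in>strip R ` M. Pl i \<in> B) \<longleftrightarrow> (\<exists>B\<in>M. Pl i \<in> B)" using memP by auto
  show ?thesis
  proof (cases "\<exists>B\<in>M. Pl i \<in> B")
    case True
    have am: "amax E (dl i 1) M = {B\<in>M. Pl i \<in> B}"
      using True unfolding amax_def La sg_def by auto
    have s1: "{B'\<in>strip R ` M. Pl i \<in> B'} = strip R ` {B\<in>M. Pl i \<in> B}" using memP by auto
    have pw: "strip R B - {Pl i} = strip (insert i R) B" if "B \<in> {B\<in>M. Pl i \<in> B}" for B
    proof -
      have "Br i \<notin> B" using that tvM i(1) unfolding tv_def by auto
      then show ?thesis unfolding strip_def ground_insert by auto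
    qed
    have "contract1 (strip R ` M) i = (\<lambda>B. B - {Pl i}) ` strip R ` {B\<in>M. Pl i \<in> B}"
      unfolding contract1_def using ex True s1 by simp
    also have "\<dots> = strip (insert i R) ` {B\<in>M. Pl i \<in> B}"
      unfolding image_image using pw by (rule image_cong[OF refl])
    finally show ?thesis unfolding am .
  next
    case False
    have am: "amax E (dl i 1) M = M"
      using False unfolding amax_def La sg_def by auto
    have "contract1 (strip R ` M) i = (\<lambda>B. B - {Pl i, Br i}) ` strip R ` M"
      unfolding contract1_def proj_def using ex False by simp
    also have "\<dots> = strip (insert i R) ` M"
      unfolding image_image by (rule image_cong[OF refl]) (auto simp: strip_def ground_insert)
    finally show ?thesis unfolding am .
  qed
qed

lemma delete_step:
  assumes E: "finite E" and i: "i \<in> E" "i \<notin> R" and tvM: "\<And>B. B \<in> M \<Longrightarrow> tv E B"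
  shows "delete1 (strip R ` M) i = strip (insert i R) ` amax E (dl i (-1)) M"
proof -
  have La: "L E (dl i (-1)) z = - sg z i" for z using L_dl[OF E i(1)] by simp
  have memP: "Br i \<in> strip R B \<longleftrightarrow> Br i \<in> B" for B using i(2) by (simp add: strip_def Br_ground)
  have ex: "(\<exists>B\<in>strip R ` M. Br i \<in> B) \<longleftrightarrow> (\<exists>B\<in>M. Br i \<in> B)" using memP by auto
  have sgB: "sg B i = (if Br i \<in> B then -1 else 1)" if "B \<in> M" for B
    using tvM[OF that] i(1) unfolding tv_def sg_def by auto
  show ?thesis
  proof (cases "\<exists>B\<in>M. Br i \<in> B")
    case True
    have am: "amax E (dl i (-1)) M = {B\<in>M. Br i \<in> B}"
      using True sgB unfolding amax_def La by (auto split: if_splits)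
    have s1: "{B'\<in>strip R ` M. Br i \<in> B'} = strip R ` {B\<in>M. Br i \<in> B}" using memP by auto
    have pw: "strip R B - {Br i} = strip (insert i R) B" if "B \<in> {B\<in>M. Br i \<in> B}" for B
    proof -
      have "Pl i \<notin> B" using that tvM i(1) unfolding tv_def by auto
      then show ?thesis unfolding strip_def ground_insert by auto
    qed
    have "delete1 (strip R ` M) i = (\<lambda>B. B - {Br i}) ` strip R ` {B\<in>M. Br i \<in> B}"
      unfolding delete1_def using ex True s1 by simp
    also have "\<dots> = strip (insert i R) ` {B\<in>M. Br i \<in> B}"
      unfolding image_image using pw by (rule image_cong[OF refl])
    finally show ?thesis unfolding am .
  next
    case False
    have am: "amax E (dl i (-1)) M = M"
      using False sgB unfolding amax_def La by auto
    have "delete1 (strip R ` M) i = (\<lambda>B. B - {Pl i, Br i}) ` strip R ` M"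
      unfolding delete1_def proj_def using ex False by simp
    also have "\<dots> = strip (insert i R) ` M"
      unfolding image_image by (rule image_cong[OF refl]) (auto simp: strip_def ground_insert)
    finally show ?thesis unfolding am .
  qed
qed

lemma stepf_simp: "stepf E M (i,\<sigma>) = amax E (dl i \<sigma>) M" by (simp add: stepf_def)

lemma contract_fold:
  assumes E: "finite E"
  shows "\<And>M R. (\<And>B. B \<in> M \<Longrightarrow> tv E B) \<Longrightarrow> distinct xs \<Longrightarrow> set xs \<subseteq> E \<Longrightarrow> set xs \<inter> R = {} \<Longrightarrow>
    foldl contract1 (strip R ` M) xs = strip (R \<union> set xs) ` foldl (stepf E) M (map (\<lambda>i. (i,1)) xs)"
proof (induction xs)
  case Nil then show ?case by simp
next
  case (Cons x xs)
  have st: "contract1 (strip R ` M) x = strip (insert x R) ` amax E (dl x 1) M"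
    by (rule contract_step[OF E]) (use Cons.prems in auto)
  have tv': "\<And>B. B \<in> amax E (dl x 1) M \<Longrightarrow> tv E B" using Cons.prems(1) amax_sub by blast
  have "foldl contract1 (strip (insert x R) ` amax E (dl x 1) M) xs
      = strip (insert x R \<union> set xs) ` foldl (stepf E) (amax E (dl x 1) M) (map (\<lambda>i. (i,1)) xs)"
    by (rule Cons.IH[OF tv']) (use Cons.prems in auto)
  then show ?case using st by (simp add: stepf_simp)
qed

lemma delete_fold:
  assumes E: "finite E"
  shows "\<And>M R. (\<And>B. B \<in> M \<Longrightarrow> tv E B) \<Longrightarrow> distinct xs \<Longrightarrow> set xs \<subseteq> E \<Longrightarrow> set xs \<inter> R = {} \<Longrightarrow>
    foldl delete1 (strip R ` M) xs = strip (R \<union> set xs) ` foldl (stepf E) M (map (\<lambda>i. (i,-1)) xs)"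
proof (induction xs)
  case Nil then show ?case by simp
next
  case (Cons x xs)
  have st: "delete1 (strip R ` M) x = strip (insert x R) ` amax E (dl x (-1)) M"
    by (rule delete_step[OF E]) (use Cons.prems in auto)
  have tv': "\<And>B. B \<in> amax E (dl x (-1)) M \<Longrightarrow> tv E B" using Cons.prems(1) amax_sub by blast
  have "foldl delete1 (strip (insert x R) ` amax E (dl x (-1)) M) xs
      = strip (insert x R \<union> set xs) ` foldl (stepf E) (amax E (dl x (-1)) M) (map (\<lambda>i. (i,-1)) xs)"
    by (rule Cons.IH[OF tv']) (use Cons.prems in auto)
  then show ?case using st by (simp add: stepf_simp)
qed

lemma bar_bar: "bar (bar a) = a" by (cases a) auto

lemma mem_bar: "x \<in> bar ` S \<longleftrightarrow> bar x \<in> S"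
  by (metis bar_bar image_iff)

lemma bar_ground: "bar a \<in> ground R \<longleftrightarrow> a \<in> ground R"
  by (cases a) (auto simp: ground_def)

lemma rank_strip:
  assumes "S \<inter> ground R = {}"
  shows "rank_fn (strip R ` M) S = rank_fn M S"
proof -
  have "bar ` S \<inter> ground R = {}" using assms by (auto simp: bar_ground)
  then have "\<And>B. S \<inter> strip R B = S \<inter> B" "\<And>B. bar ` S \<inter> strip R B = bar ` S \<inter> B"
    using assms unfolding strip_def by blast+
  then show ?thesis unfolding rank_fn_def image_image by simp
qed

definition wt :: "'a selt set \<Rightarrow> 'a \<Rightarrow> real" where
  "wt S j = (if Pl j \<in> S then 1 else if Br j \<in> S then -1 else 0)"

lemma card_count:
  assumes "finite E" shows "real (card {j\<in>E. P j}) = (\<Sum>j\<in>E. if P j then 1 else 0)"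
  using sum_ind_card[OF assms, of "{j\<in>E. P j}" 1] by simp

lemma card_ground_sub:
  assumes E: "finite E" and X: "X \<subseteq> ground E"
  shows "real (card X) = (\<Sum>j\<in>E. (if Pl j \<in> X then 1 else 0) + (if Br j \<in> X then 1 else 0))"
proof -
  have XU: "X = Pl ` {j\<in>E. Pl j \<in> X} \<union> Br ` {j\<in>E. Br j \<in> X}" using X unfolding ground_def by auto
  have "card X = card (Pl ` {j\<in>E. Pl j \<in> X}) + card (Br ` {j\<in>E. Br j \<in> X})"
    by (subst XU, rule card_Un_disjoint) (use E in auto)
  also have "\<dots> = card {j\<in>E. Pl j \<in> X} + card {j\<in>E. Br j \<in> X}"
    by (simp add: card_image inj_on_def)
  finally have "real (card X) = real (card {j\<in>E. Pl j \<in> X}) + real (card {j\<in>E. Br j \<in> X})" by simp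
  then show ?thesis using card_count[OF E] by (simp add: sum.distrib)
qed

lemma val_L:
  assumes E: "finite E" and S: "admissible E S" and B: "tv E B"
  shows "real_of_int (int (card (S \<inter> B)) - int (card (bar ` S \<inter> B))) = L E (wt S) B"
proof -
  have s1: "S \<inter> B \<subseteq> ground E" using B unfolding tv_def by auto
  have s2: "bar ` S \<inter> B \<subseteq> ground E" using B unfolding tv_def by auto
  have "real_of_int (int (card (S \<inter> B)) - int (card (bar ` S \<inter> B))) = real (card (S \<inter> B)) - real (card (bar ` S \<inter> B))"
    by simp
  also have "\<dots> = (\<Sum>j\<in>E. ((if Pl j \<in> S \<inter> B then 1 else 0) + (if Br j \<in> S \<inter> B then 1 else 0))
      - ((if Pl j \<in> bar ` S \<inter> B then 1 else 0) + (if Br j \<in> bar ` S \<inter> B then 1 else 0)))"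
    unfolding card_ground_sub[OF E s1] card_ground_sub[OF E s2] by (simp add: sum_subtractf)
  also have "\<dots> = L E (wt S) B"
    unfolding L_def
  proof (rule sum.cong[OF refl])
    fix j assume j: "j \<in> E"
    have "\<not> (Pl j \<in> S \<and> Br j \<in> S)" using S unfolding admissible_def by blast
    moreover have "Pl j \<in> B \<longleftrightarrow> Br j \<notin> B" using B j unfolding tv_def by blast
    ultimately show "((if Pl j \<in> S \<inter> B then 1 else 0) + (if Br j \<in> S \<inter> B then 1 else 0))
      - ((if Pl j \<in> bar ` S \<inter> B then 1 else 0) + (if Br j \<in> bar ` S \<inter> B then 1 else 0)) = wt S j * sg B j"
      unfolding wt_def sg_def by (auto simp: mem_bar)
  qed
  finally show ?thesis .
qed

lemma rank_L:
  assumes E: "finite E" and S: "admissible E S" and tvM: "\<And>B. B \<in> M \<Longrightarrow> tv E B"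
    and fin: "finite M" and ne: "M \<noteq> {}"
  shows "real_of_int (rank_fn M S) = mx E (wt S) M"
proof -
  let ?v = "\<lambda>B. int (card (S \<inter> B)) - int (card (bar ` S \<inter> B))"
  have "real_of_int (rank_fn M S) = Max (real_of_int ` ?v ` M)"
    unfolding rank_fn_def by (rule mono_Max_commute) (use fin ne in \<open>auto simp: mono_def\<close>)
  also have "real_of_int ` ?v ` M = L E (wt S) ` M"
    unfolding image_image by (rule image_cong[OF refl]) (use val_L[OF E S tvM] in auto)
  finally show ?thesis unfolding mx_def .
qed


lemma tw_append: "tw (p @ q) j = tw p j + tw q j"
  by (induction p rule: tw.induct) auto

lemma tw_map: "distinct xs \<Longrightarrow> tw (map (\<lambda>i. (i,\<sigma>)) xs) j = (if j \<in> set xs then \<sigma> else 0)"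
  by (induction xs) (auto simp: dl_def)

theorem proposition2p3:
  fixes E :: "'a::finite set" and F :: "'a selt set set"
    and A B :: "'a set" and S :: "'a selt set"
  assumes "delta_matroid E F"
    and "A \<subseteq> E" and "B \<subseteq> E" and "A \<inter> B = {}"
    and "admissible E S"
    and "S \<inter> (Pl ` A \<union> Pl ` B \<union> Br ` A \<union> Br ` B) = {}"
  shows "rank_fn (delete (contract F A) B) S
       = rank_fn F (S \<union> Pl ` A \<union> Br ` B) - rank_fn F (Pl ` A \<union> Br ` B)"
proof -
  have E: "finite E" by simp
  have tvF: "\<And>X. X \<in> F \<Longrightarrow> tv E X" using assms(1) tv_of_dm[OF E] unfolding delta_matroid_def by blast
  have "F \<subseteq> Pow (ground E)" using tvF unfolding tv_def by blast
  then have finF: "finite F" using finite_ground[OF E] finite_subset by blast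
  have neF: "F \<noteq> {}" using assms(1) unfolding delta_matroid_def by blast
  have epF: "EP2 E F" by (rule EP2_dm[OF assms(1)])
  have "\<exists>xs. set xs = A \<and> distinct xs" using finite_distinct_list[of A] by simp
  then have xs0: "set (SOME xs. set xs = A \<and> distinct xs) = A \<and> distinct (SOME xs. set xs = A \<and> distinct xs)"
    by (rule someI_ex)
  define xs where "xs = (SOME xs. set xs = A \<and> distinct xs)"
  have xs: "set xs = A" "distinct xs" using xs0 unfolding xs_def by auto
  have "\<exists>ys. set ys = B \<and> distinct ys" using finite_distinct_list[of B] by simp
  then have ys0: "set (SOME ys. set ys = B \<and> distinct ys) = B \<and> distinct (SOME ys. set ys = B \<and> distinct ys)"
    by (rule someI_ex)
  define ys where "ys = (SOME ys. set ys = B \<and> distinct ys)"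
  have ys: "set ys = B" "distinct ys" using ys0 unfolding ys_def by auto
  define M1 where "M1 = foldl (stepf E) F (map (\<lambda>i. (i,1)) xs)"
  define ps where "ps = map (\<lambda>i. (i,1::real)) xs @ map (\<lambda>i. (i,-1)) ys"
  define M2 where "M2 = foldl (stepf E) F ps"
  have F0: "strip {} ` F = F" by (simp add: strip_def ground_def)
  have c: "contract F A = strip A ` M1"
  proof -
    have "contract F A = foldl contract1 (strip {} ` F) xs" unfolding contract_def xs_def F0 ..
    also have "\<dots> = strip ({} \<union> set xs) ` M1" unfolding M1_def
      by (rule contract_fold[OF E tvF xs(2)]) (use xs assms(2) in auto)
    finally show ?thesis using xs by simp
  qed
  have p1: "foldl (stepf E) F (map (\<lambda>i. (i,1)) xs) \<subseteq> F \<and> foldl (stepf E) F (map (\<lambda>i. (i,1)) xs) \<noteq> {}"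
    by (rule fold_props[OF finF neF])
  have tvM1: "\<And>X. X \<in> M1 \<Longrightarrow> tv E X" using p1 tvF unfolding M1_def by blast
  have d: "delete (contract F A) B = strip (A \<union> B) ` M2"
  proof -
    have "delete (contract F A) B = foldl delete1 (strip A ` M1) ys" unfolding delete_def ys_def c ..
    also have "\<dots> = strip (A \<union> set ys) ` foldl (stepf E) M1 (map (\<lambda>i. (i,-1)) ys)"
      by (rule delete_fold[OF E tvM1 ys(2)]) (use ys assms(3,4) in auto)
    also have "foldl (stepf E) M1 (map (\<lambda>i. (i,-1)) ys) = M2"
      unfolding M2_def M1_def ps_def by simp
    finally show ?thesis using ys by simp
  qed
  have Sg: "S \<inter> ground (A \<union> B) = {}" using assms(6) unfolding ground_def by blast
  have p2: "M2 \<subseteq> F \<and> M2 \<noteq> {}" unfolding M2_def by (rule fold_props[OF finF neF])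
  have tvM2: "\<And>X. X \<in> M2 \<Longrightarrow> tv E X" using p2 tvF by blast
  have finM2: "finite M2" using p2 finF finite_subset by blast
  define T where "T = Pl ` A \<union> Br ` B"
  have SA: "\<And>j. j \<in> A \<union> B \<Longrightarrow> Pl j \<notin> S \<and> Br j \<notin> S" using assms(6) by blast
  have twT: "tw ps = wt T"
  proof
    fix j
    have "tw ps j = (if j \<in> A then 1 else 0) + (if j \<in> B then -1 else 0)"
      unfolding ps_def tw_append tw_map[OF xs(2)] tw_map[OF ys(2)] xs ys ..
    also have "\<dots> = wt T j" unfolding wt_def T_def using assms(4) by auto
    finally show "tw ps j = wt T j" .
  qed
  have wST: "wt (S \<union> T) = (\<lambda>j. wt S j + wt T j)"
  proof
    fix j
    show "wt (S \<union> T) j = wt S j + wt T j"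
    proof (cases "j \<in> A \<union> B")
      case True
      then show ?thesis using SA[OF True] assms(4) unfolding wt_def T_def by auto
    next
      case False
      then have "Pl j \<notin> T" "Br j \<notin> T" unfolding T_def by auto
      then show ?thesis unfolding wt_def by auto
    qed
  qed
  have admT: "admissible E T" using assms(2,3,4) unfolding admissible_def T_def ground_def by auto
  have admST: "admissible E (S \<union> T)"
    using admT assms(5) SA unfolding admissible_def T_def by blast
  have "real_of_int (rank_fn (delete (contract F A) B) S) = real_of_int (rank_fn M2 S)"
    unfolding d using rank_strip[OF Sg] by simp
  also have "\<dots> = mx E (wt S) M2" by (rule rank_L[OF E assms(5) tvM2 finM2]) (use p2 in auto)
  also have "\<dots> = mx E (\<lambda>j. wt S j + tw ps j) F - mx E (tw ps) F"
    unfolding M2_def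
  proof (rule main_ind[OF E tvF finF neF epF])
    show "distinct (map fst ps)" unfolding ps_def using xs ys assms(4) by (simp add: o_def)
    show "fst ` set ps \<subseteq> E" unfolding ps_def using xs ys assms(2,3) by auto
    show "\<forall>p\<in>set ps. snd p = 1 \<or> snd p = -1" unfolding ps_def by auto
    show "\<And>j. \<bar>wt S j\<bar> \<le> 1" unfolding wt_def by auto
    show "\<And>j. j \<in> fst ` set ps \<Longrightarrow> wt S j = 0"
    proof -
      fix j assume "j \<in> fst ` set ps"
      then have "j \<in> A \<union> B" unfolding ps_def using xs ys by auto
      then show "wt S j = 0" using SA unfolding wt_def by auto
    qed
  qed
  also have "\<dots> = mx E (wt (S \<union> T)) F - mx E (wt T) F" unfolding twT wST ..
  also have "\<dots> = real_of_int (rank_fn F (S \<union> T)) - real_of_int (rank_fn F T)"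
    using rank_L[OF E admST tvF finF neF] rank_L[OF E admT tvF finF neF] by simp
  finally have "real_of_int (rank_fn (delete (contract F A) B) S) = real_of_int (rank_fn F (S \<union> T) - rank_fn F T)"
    by simp
  then have "rank_fn (delete (contract F A) B) S = rank_fn F (S \<union> T) - rank_fn F T"
    by (simp only: of_int_eq_iff)
  then show ?thesis unfolding T_def by (simp add: Un_assoc)
qed

end
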